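(* There exists a sequence $(S_i)_{i=1}^\infty$ of functions, each submultiplicative on $[1,\infty)$, such that for every nonempty finite set $A\subset\mathbb N$ and every $j\in\mathbb N\setminus A$, $$\sup_{n\ge1}\frac{S_j(n)}{\max_{i\in A}S_i(n)}=\infty.$$
   Context: Let $2\le n_0\le\infty$ and let $S$ be a real-valued function on $[1,n_0]$ (on $[1,\infty)$ if $n_0=\infty$). $S$ is called submultiplicative on $[1,n_0]$ if: (a) $S$ is piecewise-linear, continuous, strictly increasing and concave; (b) $S(x)=x$ for $1\le x\le 2$; (c) $S(xy)\le S(x)S(y)$ for all $x,y$ with $1\le x,y,xy\le n_0$. *)

theory Defs
  imports "HOL-Analysis.Analysis"
begin

definition piecewise_linear_on :: "real set \<Rightarrow> (real \<Rightarrow> real) \<Rightarrow> bool" where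
  "piecewise_linear_on I S \<longleftrightarrow>
     (\<forall>a b. a \<in> I \<and> b \<in> I \<and> a \<le> b \<longrightarrow>
       (\<exists>P. finite P \<and> a \<in> P \<and> b \<in> P \<and> P \<subseteq> {a..b} \<and>
         (\<forall>x y. x \<in> P \<and> y \<in> P \<and> x < y \<and> {x<..<y} \<inter> P = {} \<longrightarrow>
            (\<exists>m c. \<forall>t\<in>{x..y}. S t = m * t + c))))"

definition submultiplicative_inf :: "(real \<Rightarrow> real) \<Rightarrow> bool" where
  "submultiplicative_inf S \<longleftrightarrow>
     piecewise_linear_on {1..} S \<and> continuous_on {1..} S \<and>
     strict_mono_on {1..} S \<and> concave_on {1..} S \<and>
     (\<forall>x\<in>{1..2}. S x = x) \<and>
     (\<forall>x y. 1 \<le> x \<longrightarrow> 1 \<le> y \<longrightarrow> S (x * y) \<le> S x * S y)"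

end

theory Submission
  imports Defs "HOL-Library.Nat_Bijection"
begin

definition own :: "nat \<Rightarrow> nat" where "own n = fst (prod_decode n)"

definition LL :: "nat \<Rightarrow> nat \<Rightarrow> real" where "LL n k = real k / 2^n + 2^n"

definition phi :: "nat \<Rightarrow> nat \<Rightarrow> real" where
  "phi i k = Min (insert (real k) ((\<lambda>n. LL n k) ` {n. n \<le> k \<and> own n \<noteq> i}))"

lemma phi_fin: "finite (insert (real k) ((\<lambda>n. LL n k) ` {n. n \<le> k \<and> own n \<noteq> i}))"
  by auto

lemma phi_le_k: "phi i k \<le> real k"
  unfolding phi_def using phi_fin by (intro Min_le) auto

lemma LL_ge: "LL n k \<ge> 2^n" unfolding LL_def by simp

lemma phi_le_LL: assumes "own n \<noteq> i" shows "phi i k \<le> LL n k"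
proof (cases "n \<le> k")
  case True
  then show ?thesis unfolding phi_def using phi_fin assms by (intro Min_le) auto
next
  case False
  have "real k < 2^n"
  proof -
    have "k < 2^n" using False less_exp[of n] by linarith
    then show ?thesis by (metis of_nat_less_iff of_nat_numeral of_nat_power)
  qed
  then show ?thesis using phi_le_k[of i k] LL_ge[of n k] by linarith
qed

lemma phi_cases: "phi i k = real k \<or> (\<exists>n. own n \<noteq> i \<and> phi i k = LL n k)"
proof -
  have "phi i k \<in> insert (real k) ((\<lambda>n. LL n k) ` {n. n \<le> k \<and> own n \<noteq> i})"
    unfolding phi_def using phi_fin by (intro Min_in) auto
  then show ?thesis by auto
qed

lemma phi_ge1: assumes "k \<ge> 1" shows "phi i k \<ge> 1"
proof -
  have "(1::real) \<le> LL n k" for n :: nat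
    using LL_ge[of n k] one_le_power[of "2::real" n] by linarith
  then show ?thesis using phi_cases[of i k] assms by force
qed

lemma phi_nonneg: "phi i k \<ge> 0"
  using phi_cases[of i k] LL_ge[of _ k] by (smt (verit) of_nat_0_le_iff zero_le_power)

lemma phi_0: "phi i 0 = 0"
  using phi_le_k[of i 0] phi_nonneg[of i 0] by simp

lemma phi_sub: "phi i (k + l) \<le> phi i k + phi i l"
proof -
  have A: "phi i (k+l) \<le> LL a k + l / 2^a" if "own a \<noteq> i" for a
    using phi_le_LL[OF that, of "k+l"] unfolding LL_def by (simp add: add_divide_distrib)
  have B: "phi i (k+l) \<le> LL a l + k / 2^a" if "own a \<noteq> i" for a
    using phi_le_LL[OF that, of "k+l"] unfolding LL_def by (simp add: add_divide_distrib)
  have dl: "real l / 2^a \<le> real l" for a l :: nat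
    by (simp add: divide_le_eq mult_le_cancel_left1)
  have LLge: "real l / 2^a \<le> LL b l" if "b \<le> a" for a b l :: nat
  proof -
    have "real l / 2^a \<le> real l / 2^b"
      using that by (intro divide_left_mono) (auto simp: power_increasing)
    moreover have "(0::real) \<le> 2^b" by simp
    ultimately show ?thesis unfolding LL_def by linarith
  qed
  show ?thesis
    using phi_cases[of i k] phi_cases[of i l]
  proof (elim disjE exE conjE)
    assume "phi i k = real k" "phi i l = real l"
    then show ?thesis using phi_le_k[of i "k+l"] by simp
  next
    fix b assume "phi i k = real k" "own b \<noteq> i" "phi i l = LL b l"
    then show ?thesis using B[of b] dl[of k b] by linarith
  next
    fix a assume "phi i l = real l" "own a \<noteq> i" "phi i k = LL a k"
    then show ?thesis using A[of a] dl[of l a] by linarith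
  next
    fix a b assume h: "own a \<noteq> i" "phi i k = LL a k" "own b \<noteq> i" "phi i l = LL b l"
    show ?thesis
    proof (cases "b \<le> a")
      case True
      then show ?thesis using h A[of a] LLge[of b a l] by linarith
    next
      case False
      then show ?thesis using h B[of b] LLge[of a b k] by linarith
    qed
  qed
qed

lemma phi_Suc: "phi i k \<le> phi i (Suc k)"
  using phi_cases[of i "Suc k"]
proof (elim disjE exE conjE)
  assume "phi i (Suc k) = real (Suc k)" then show ?thesis using phi_le_k[of i k] by simp
next
  fix n assume "own n \<noteq> i" "phi i (Suc k) = LL n (Suc k)"
  then show ?thesis using phi_le_LL[of n i k] unfolding LL_def
    by (smt (verit) divide_right_mono of_nat_Suc of_nat_0_le_iff zero_le_power)
qed

lemma phi_mono: "k \<le> k' \<Longrightarrow> phi i k \<le> phi i k'"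
  using lift_Suc_mono_le[of "phi i", OF phi_Suc] by blast

lemma phi_drop: "phi i k - real d \<le> phi i (k - d)"
proof (cases "d \<le> k")
  case True
  then have "phi i k \<le> phi i (k-d) + phi i d" using phi_sub[of i "k-d" d] by simp
  then show ?thesis using phi_le_k[of i d] by linarith
next
  case False
  then show ?thesis using phi_le_k[of i k] phi_nonneg[of i "k-d"] by simp
qed

lemma LL_big: assumes "B \<ge> 1" "real k \<ge> B * B" shows "LL n k \<ge> B"
proof (cases "(2::real)^n \<ge> B")
  case True then show ?thesis using LL_ge[of n k] by linarith
next
  case False
  then have p: "(2::real)^n > 0" "(2::real)^n < B" by auto
  have "B * 2^n \<le> B * B" using p assms by (intro mult_left_mono) auto
  then have "B * 2^n \<le> real k" using assms by linarith
  then have "B \<le> real k / 2^n" using p by (simp add: le_divide_eq)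
  then show ?thesis unfolding LL_def using p by linarith
qed

lemma phi_big: assumes "B \<ge> 1" "real k \<ge> B * B" shows "phi i k \<ge> B"
proof -
  have "B * 1 \<le> B * B" by (rule mult_left_mono) (use assms in auto)
  then have "B \<le> real k" using assms by linarith
  then show ?thesis using phi_cases[of i k] LL_big[OF assms] by auto
qed

lemma gap_aux: fixes u w :: real assumes upos: "u > 0" and wpos: "w > 0"
  and c: "w \<ge> 2 * u \<or> 2 * w \<le> u" shows "5/2 * u \<le> u*u/w + w"
proof -
  have "(w - 2*u) * (2*w - u) \<ge> 0"
    using c
  proof
    assume "w \<ge> 2 * u" then show ?thesis using upos by (intro mult_nonneg_nonneg) auto
  next
    assume "2 * w \<le> u" then show ?thesis using wpos by (intro mult_nonpos_nonpos) auto
  qed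
  then have "5/2 * u * w \<le> u*u + w*w" by (simp add: algebra_simps)
  then have "5/2 * u \<le> (u*u + w*w) / w" using wpos by (simp add: le_divide_eq)
  also have "\<dots> = u*u/w + w" using wpos by (simp add: field_simps)
  finally show ?thesis .
qed

lemma four_pow: "real ((4::nat)^n) = 2^n * 2^n"
proof -
  have "real ((4::nat)^n) = (2*2::real)^n" by simp
  also have "\<dots> = 2^n * 2^n" by (rule power_mult_distrib)
  finally show ?thesis .
qed

lemma LL_gap: assumes "n' \<noteq> n" shows "LL n' (4^n) \<ge> 5/2 * 2^n"
proof -
  have c: "(2::real)^n' \<ge> 2 * 2^n \<or> 2 * (2::real)^n' \<le> 2^n"
  proof (cases "n' < n")
    case True
    then have "Suc n' \<le> n" by simp
    then have "(2::real)^(Suc n') \<le> 2^n" by (intro power_increasing) auto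
    then show ?thesis by simp
  next
    case False
    then have "Suc n \<le> n'" using assms by simp
    then have "(2::real)^(Suc n) \<le> 2^n'" by (intro power_increasing) auto
    then show ?thesis by simp
  qed
  have "5/2 * (2::real)^n \<le> 2^n * 2^n / 2^n' + 2^n'"
  proof -
    have A: "(0::real) < 2^n" by simp
    have B: "(0::real) < 2^n'" by simp
    show ?thesis using gap_aux[OF A B c] .
  qed
  then show ?thesis unfolding LL_def four_pow .
qed

lemma phi_gap: assumes "own n = j" "n \<ge> 2" shows "phi j (4^n) \<ge> 5/2 * 2^n"
proof -
  have "(5/2::real) * 2^n \<le> 4 * 2^n" by (intro mult_right_mono) auto
  also have "\<dots> = 2^(n+2)" by (simp add: power_add)
  also have "\<dots> \<le> 2^(2*n)" using assms by (intro power_increasing) auto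
  also have "\<dots> = 2^n * 2^n" by (simp only: mult_2 power_add)
  also have "\<dots> = real ((4::nat)^n)" by (rule four_pow[symmetric])
  finally have d: "(5/2::real) * 2^n \<le> real ((4::nat)^n)" .
  show ?thesis using phi_cases[of j "4^n"]
  proof (elim disjE exE conjE)
    assume "phi j (4 ^ n) = real (4 ^ n)"
    then show ?thesis using d by (simp only:)
  next
    fix n' assume h: "own n' \<noteq> j" "phi j (4 ^ n) = LL n' (4 ^ n)"
    then have "n' \<noteq> n" using assms(1) by blast
    then have "LL n' (4^n) \<ge> 5/2*2^n" by (rule LL_gap)
    with h(2) show ?thesis by linarith
  qed
qed

definition ell :: "nat \<Rightarrow> nat \<Rightarrow> real \<Rightarrow> real" where
  "ell i k x = (x - 1) / 2^k + 2 powr phi i k"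

definition SS :: "nat \<Rightarrow> real \<Rightarrow> real" where
  "SS i x = Inf (range (\<lambda>k. ell i k x))"

lemma ell_0: "ell i 0 x = x"
  unfolding ell_def phi_0 by simp

lemma ell_ge_pow: "x \<ge> 1 \<Longrightarrow> ell i k x \<ge> 2 powr phi i k"
  unfolding ell_def by simp

lemma ell_ge_lin: "x \<ge> 1 \<Longrightarrow> ell i k x \<ge> (x - 1) / 2^k"
  unfolding ell_def by simp

lemma ell_nonneg: "x \<ge> 1 \<Longrightarrow> ell i k x \<ge> 0"
  using ell_ge_pow[of x i k] by (smt (verit) powr_ge_zero)

lemma ell_bdd: "x \<ge> 1 \<Longrightarrow> bdd_below (range (\<lambda>k. ell i k x))"
  using ell_nonneg by (intro bdd_belowI[of _ 0]) auto

lemma SS_le: "x \<ge> 1 \<Longrightarrow> SS i x \<le> ell i k x"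
  unfolding SS_def using ell_bdd by (intro cInf_lower) auto

lemma two_powr_ge: fixes b :: real assumes "b \<ge> 1" shows "b \<le> 2 powr b"
proof -
  define m where "m = nat \<lfloor>b\<rfloor>"
  have bm: "b < real m + 1" unfolding m_def using assms by linarith
  have mb: "real m \<le> b" unfolding m_def using assms by linarith
  have "m < 2^m" by (rule less_exp)
  then have "m + 1 \<le> 2^m" by linarith
  then have "real m + 1 \<le> 2^m" by (metis of_nat_1 of_nat_add of_nat_le_iff of_nat_numeral of_nat_power)
  also have "(2::real)^m = 2 powr (real m)" by (simp add: powr_realpow)
  also have "\<dots> \<le> 2 powr b" using mb by (intro powr_mono) auto
  finally show ?thesis using bm by linarith
qed

lemma ell_big: assumes "1 \<le> x" "x \<le> b" "real k \<ge> b * b" shows "ell i k x \<ge> x"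
proof -
  have "phi i k \<ge> b" using phi_big[of b k i] assms by linarith
  then have "2 powr b \<le> 2 powr phi i k" by (intro powr_mono) auto
  then show ?thesis using two_powr_ge[of b] assms ell_ge_pow[of x i k] by linarith
qed

definition Nb :: "real \<Rightarrow> nat" where "Nb b = nat \<lceil>b * b\<rceil>"

lemma SS_attain: assumes "1 \<le> x" "x \<le> b"
  shows "\<exists>k \<le> Nb b. SS i x = ell i k x \<and> (\<forall>l. ell i k x \<le> ell i l x)"
proof -
  define F where "F = (\<lambda>k. ell i k x) ` {..Nb b}"
  have fin: "finite F" "F \<noteq> {}" unfolding F_def by auto
  have "Min F \<in> (\<lambda>k. ell i k x) ` {..Nb b}" using Min_in[OF fin] F_def by simp
  then obtain k where k: "k \<le> Nb b" "Min F = ell i k x" by blast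
  have all: "ell i k x \<le> ell i l x" for l
  proof (cases "l \<le> Nb b")
    case True
    then show ?thesis using k Min_le[OF fin(1), of "ell i l x"] unfolding F_def by auto
  next
    case False
    then have "real l \<ge> b * b" unfolding Nb_def by linarith
    then have "ell i l x \<ge> x" using ell_big assms by blast
    moreover have "ell i k x \<le> ell i 0 x" using k Min_le[OF fin(1), of "ell i 0 x"] unfolding F_def by auto
    ultimately show ?thesis using ell_0[of i x] by linarith
  qed
  have "SS i x = ell i k x"
  proof (rule antisym)
    show "SS i x \<le> ell i k x" using SS_le assms by auto
    show "ell i k x \<le> SS i x" unfolding SS_def using all by (intro cInf_greatest) auto
  qed
  then show ?thesis using k all by blast
qed

lemma SS_attain1: assumes "1 \<le> x" shows "\<exists>k. SS i x = ell i k x"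
  using SS_attain[OF assms order_refl] by blast

lemma SS_id: assumes "1 \<le> x" "x \<le> 2" shows "SS i x = x"
proof (rule antisym)
  show "SS i x \<le> x" using SS_le[of x i 0] ell_0 assms by simp
  have "x \<le> ell i k x" for k
  proof (cases "k = 0")
    case True then show ?thesis using ell_0 by simp
  next
    case False
    then have "phi i k \<ge> 1" using phi_ge1 by simp
    then have "2 powr 1 \<le> 2 powr phi i k" by (intro powr_mono) auto
    then show ?thesis using ell_ge_pow[of x i k] assms by simp
  qed
  then show "x \<le> SS i x" unfolding SS_def by (intro cInf_greatest) auto
qed

lemma submult_aux: fixes a a' v v' x y :: real
  assumes "0 \<le> a" "a \<le> 1" "0 \<le> a'" "a' \<le> 1" "1 \<le> v" "1 \<le> v'" "1 \<le> x" "1 \<le> y"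
  shows "(x*y - 1) * (a * a') + v * v' \<le> (a * (x - 1) + v) * (a' * (y - 1) + v')"
proof -
  have e: "(a * (x - 1) + v) * (a' * (y - 1) + v') - ((x*y - 1) * (a * a') + v * v')
      = a * (x - 1) * (v' - a') + a' * (y - 1) * (v - a)" by (simp add: algebra_simps)
  have "a * (x - 1) * (v' - a') \<ge> 0" using assms by (intro mult_nonneg_nonneg) auto
  moreover have "a' * (y - 1) * (v - a) \<ge> 0" using assms by (intro mult_nonneg_nonneg) auto
  ultimately show ?thesis using e by linarith
qed

lemma SS_submult: assumes "1 \<le> x" "1 \<le> y" shows "SS i (x * y) \<le> SS i x * SS i y"
proof -
  obtain k where k: "SS i x = ell i k x" using SS_attain1 assms by blast
  obtain l where l: "SS i y = ell i l y" using SS_attain1 assms by blast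
  have "1 * 1 \<le> x * y" by (rule mult_mono) (use assms in auto)
  then have xy: "1 \<le> x * y" by simp
  have "SS i (x*y) \<le> ell i (k+l) (x*y)" using SS_le xy by blast
  also have "\<dots> = (x*y - 1) * ((1/2^k) * (1/2^l)) + 2 powr phi i (k+l)"
    unfolding ell_def by (simp add: power_add)
  also have "\<dots> \<le> (x*y - 1) * ((1/2^k) * (1/2^l)) + 2 powr phi i k * 2 powr phi i l"
  proof -
    have "2 powr phi i (k+l) \<le> 2 powr (phi i k + phi i l)" using phi_sub by (intro powr_mono) auto
    then show ?thesis by (simp add: powr_add)
  qed
  also have "\<dots> \<le> ((1/2^k) * (x - 1) + 2 powr phi i k) * ((1/2^l) * (y - 1) + 2 powr phi i l)"
  proof (rule submult_aux)
    show "1 \<le> 2 powr phi i k" using phi_nonneg by (simp add: ge_one_powr_ge_zero)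
    show "1 \<le> 2 powr phi i l" using phi_nonneg by (simp add: ge_one_powr_ge_zero)
  qed (use assms in auto)
  also have "\<dots> = SS i x * SS i y" unfolding k l ell_def by simp
  finally show ?thesis .
qed

lemma SS_strict: assumes "1 \<le> x" "x < y" shows "SS i x < SS i y"
proof -
  have "1 \<le> y" using assms by linarith
  then obtain k where k: "SS i y = ell i k y" using SS_attain1 by blast
  have "ell i k x < ell i k y" unfolding ell_def using assms by (simp add: divide_strict_right_mono)
  then show ?thesis using SS_le[OF assms(1), of i k] k by linarith
qed

lemma SS_lip: assumes "1 \<le> x" "x \<le> y" shows "SS i y - SS i x \<le> y - x"
proof -
  obtain k where k: "SS i x = ell i k x" using SS_attain1 assms by blast
  have "SS i y \<le> ell i k y" using SS_le assms by auto
  also have "\<dots> = ell i k x + (y - x) / 2^k" unfolding ell_def by (simp add: diff_divide_distrib)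
  also have "(y - x) / 2^k \<le> y - x" using assms by (simp add: divide_le_eq mult_le_cancel_left1)
  finally show ?thesis using k by linarith
qed

lemma SS_mono: assumes "1 \<le> x" "x \<le> y" shows "SS i x \<le> SS i y"
proof (cases "x = y")
  case False
  then have "x < y" using assms(2) by linarith
  from SS_strict[OF assms(1) this] show ?thesis by (rule less_imp_le)
next
  case True then show ?thesis by (rule subst) (rule order_refl)
qed

lemma SS_absdiff: assumes "1 \<le> x" "1 \<le> y" shows "\<bar>SS i y - SS i x\<bar> \<le> \<bar>y - x\<bar>"
proof (cases "x \<le> y")
  case True
  have a: "0 \<le> SS i y - SS i x" using SS_mono[OF assms(1) True] by simp
  have b: "SS i y - SS i x \<le> y - x" using SS_lip[OF assms(1) True] .
  have "\<bar>SS i y - SS i x\<bar> = SS i y - SS i x" using a by (rule abs_of_nonneg)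
  moreover have "\<bar>y - x\<bar> = y - x" using True by simp
  ultimately show ?thesis using b by linarith
next
  case False
  then have F: "y \<le> x" by simp
  have a: "0 \<le> SS i x - SS i y" using SS_mono[OF assms(2) F] by simp
  have b: "SS i x - SS i y \<le> x - y" using SS_lip[OF assms(2) F] .
  have "\<bar>SS i y - SS i x\<bar> = SS i x - SS i y" using a by simp
  moreover have "\<bar>y - x\<bar> = x - y" using F by simp
  ultimately show ?thesis using b by linarith
qed

lemma SS_cont: "continuous_on {1..} (SS i)"
  unfolding continuous_on_iff
proof (intro ballI allI impI)
  fix x e :: real assume x: "x \<in> {1..}" and e: "e > 0"
  show "\<exists>d>0. \<forall>x'\<in>{1..}. dist x' x < d \<longrightarrow> dist (SS i x') (SS i x) < e"
  proof (intro exI[of _ e] conjI ballI impI)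
    fix x' assume x': "x' \<in> {1..}" "dist x' x < e"
    have "\<bar>SS i x' - SS i x\<bar> \<le> \<bar>x' - x\<bar>" using SS_absdiff x x' by simp
    then show "dist (SS i x') (SS i x) < e" using x'(2) unfolding dist_real_def by linarith
  qed (rule e)
qed

lemma SS_concave: "concave_on {1..} (SS i)"
  unfolding concave_on_iff
proof (intro conjI ballI allI impI)
  show "convex {1::real..}" by (rule convex_real_interval)
  fix x y u v :: real assume x: "x \<in> {1..}" and y: "y \<in> {1..}" and uv: "u \<ge> 0" "v \<ge> 0" "u + v = 1"
  define z where "z = u * x + v * y"
  have "u * 1 + v * 1 \<le> z" unfolding z_def using x y uv by (intro add_mono mult_left_mono) auto
  then have z1: "1 \<le> z" using uv by simp
  obtain k where k: "SS i z = ell i k z" using SS_attain1 z1 by blast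
  have x1: "1 \<le> x" and y1: "1 \<le> y" using x y by auto
  have "ell i k z = u * ell i k x + v * ell i k y"
  proof -
    have "u * ell i k x + v * ell i k y = (u * x + v * y - (u + v)) / 2^k + (u + v) * 2 powr phi i k"
      unfolding ell_def by (simp add: field_simps)
    then show ?thesis unfolding z_def using uv(3) unfolding ell_def by simp
  qed
  also have "\<dots> \<ge> u * SS i x + v * SS i y"
    using SS_le[OF x1, of i k] SS_le[OF y1, of i k] uv by (intro add_mono mult_left_mono) auto
  finally have "u * SS i x + v * SS i y \<le> SS i z" using k by simp
  then show "u * SS i x + v * SS i y \<le> SS i (u *\<^sub>R x + v *\<^sub>R y)" unfolding z_def by simp
qed



lemma pl_min:
  fixes m c :: "nat \<Rightarrow> real" and a b :: real and N :: nat
  assumes "a \<le> b"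
  shows "\<exists>P. finite P \<and> a \<in> P \<and> b \<in> P \<and> P \<subseteq> {a..b} \<and>
    (\<forall>x y. x \<in> P \<and> y \<in> P \<and> x < y \<and> {x<..<y} \<inter> P = {} \<longrightarrow>
      (\<exists>k\<le>N. \<forall>t\<in>{x..y}. \<forall>l\<le>N. m k * t + c k \<le> m l * t + c l))"
proof -
  define R where "R = (\<lambda>(k,l). (c l - c k) / (m k - m l)) ` ({..N} \<times> {..N})"
  define P where "P = {a,b} \<union> ({a..b} \<inter> R)"
  have finR: "finite R" unfolding R_def by simp
  have fP: "finite P" unfolding P_def using finR by simp
  have aP: "a \<in> P" and bP: "b \<in> P" unfolding P_def by auto
  have Psub: "P \<subseteq> {a..b}" unfolding P_def using assms by auto
  have X: "\<exists>k\<le>N. \<forall>t\<in>{x..y}. \<forall>l\<le>N. m k * t + c k \<le> m l * t + c l"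
    if xy: "x \<in> P" "y \<in> P" "x < y" "{x<..<y} \<inter> P = {}" for x y
  proof -
    define mid where "mid = (x + y) / 2"
    have mid: "x < mid" "mid < y" unfolding mid_def using xy by auto
    define F where "F = (\<lambda>l. m l * mid + c l) ` {..N}"
    have fin: "finite F" "F \<noteq> {}" unfolding F_def by auto
    have "Min F \<in> (\<lambda>l. m l * mid + c l) ` {..N}" using Min_in[OF fin] F_def by simp
    then obtain k where k: "k \<le> N" "Min F = m k * mid + c k" by blast
    have kmin: "m k * mid + c k \<le> m l * mid + c l" if "l \<le> N" for l
    proof -
      have "m l * mid + c l \<in> F" unfolding F_def using that by blast
      from Min_le[OF fin(1) this] show ?thesis using k(2) by linarith
    qed
    have "\<forall>t\<in>{x..y}. \<forall>l\<le>N. m k * t + c k \<le> m l * t + c l"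
    proof (intro ballI allI impI)
      fix t l assume t: "t \<in> {x..y}" and l: "l \<le> N"
      show "m k * t + c k \<le> m l * t + c l"
      proof (rule ccontr)
        assume "\<not> ?thesis"
        then have lt: "m l * t + c l < m k * t + c k" by simp
        have hm: "m k * mid + c k \<le> m l * mid + c l" using kmin l by blast
        define r where "r = (c l - c k) / (m k - m l)"
        have kl: "(k,l) \<in> {..N}\<times>{..N}" using k l by simp
        have rR: "r \<in> R" unfolding R_def r_def by (rule rev_image_eqI[OF kl]) simp
        have mkl: "m k \<noteq> m l"
        proof
          assume "m k = m l"
          from lt hm show False unfolding \<open>m k = m l\<close> by linarith
        qed
        have rx: "x < r \<and> r < y"
        proof (cases "m l < m k")
          case True
          define d where "d = m k - m l"
          have d: "d > 0" unfolding d_def using True by simp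
          have r': "r = (c l - c k) / d" unfolding r_def d_def ..
          have "mid * d \<le> c l - c k" using hm unfolding d_def by (simp add: algebra_simps)
          then have "mid \<le> r" unfolding r' pos_le_divide_eq[OF d] .
          moreover have "c l - c k < t * d" using lt unfolding d_def by (simp add: algebra_simps)
          then have "r < t" unfolding r' pos_divide_less_eq[OF d] .
          ultimately show ?thesis using mid t by auto
        next
          case False
          then have F: "m k < m l" using mkl by simp
          define d where "d = m l - m k"
          have d: "d > 0" unfolding d_def using F by simp
          have r': "r = (c k - c l) / d" unfolding r_def d_def
            by (metis minus_diff_eq minus_divide_divide)
          have "c k - c l \<le> mid * d" using hm unfolding d_def by (simp add: algebra_simps)
          then have "r \<le> mid" unfolding r' pos_divide_le_eq[OF d] .
          moreover have "t * d < c k - c l" using lt unfolding d_def by (simp add: algebra_simps)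
          then have "t < r" unfolding r' pos_less_divide_eq[OF d] .
          ultimately show ?thesis using mid t by auto
        qed
        have "x \<in> {a..b}" "y \<in> {a..b}" using xy Psub by auto
        then have "r \<in> {a..b}" using rx by auto
        then have "r \<in> P" unfolding P_def using rR by blast
        then show False using xy(4) rx by auto
      qed
    qed
    then show ?thesis using k by blast
  qed
  show ?thesis
    apply (rule exI[of _ P])
    apply (intro conjI fP aP bP Psub allI impI)
    apply (rule X)
    apply (elim conjE, assumption)+
    done
qed

lemma ell_lin: "ell i k t = (1/2^k) * t + (2 powr phi i k - 1/2^k)"
  unfolding ell_def by (simp add: diff_divide_distrib)

lemma SS_pl: "piecewise_linear_on {1..} (SS i)"
  unfolding piecewise_linear_on_def
proof (intro allI impI)
  fix a b :: real assume ab: "a \<in> {1..} \<and> b \<in> {1..} \<and> a \<le> b"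
  have "a \<le> b" using ab by blast
  from pl_min[where a=a and b=b and m="\<lambda>k. 1/2^k" and c="\<lambda>k. 2 powr phi i k - 1/2^k" and N="Nb b", OF this]
  obtain P where fP: "finite P" and aP: "a \<in> P" and bP: "b \<in> P" and Psub: "P \<subseteq> {a..b}" and
    X: "\<forall>x y. x \<in> P \<and> y \<in> P \<and> x < y \<and> {x<..<y} \<inter> P = {} \<longrightarrow>
      (\<exists>k\<le>Nb b. \<forall>t\<in>{x..y}. \<forall>l\<le>Nb b. 1/2^k * t + (2 powr phi i k - 1/2^k)
          \<le> 1/2^l * t + (2 powr phi i l - 1/2^l))"
    by (elim exE conjE) assumption
  have Y: "\<exists>m c. \<forall>t\<in>{x..y}. SS i t = m * t + c"
    if xy: "x \<in> P \<and> y \<in> P \<and> x < y \<and> {x<..<y} \<inter> P = {}" for x y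
  proof -
    obtain k where k: "k \<le> Nb b" and
      kmin0: "\<forall>t\<in>{x..y}. \<forall>l\<le>Nb b. 1/2^k * t + (2 powr phi i k - 1/2^k)
          \<le> 1/2^l * t + (2 powr phi i l - 1/2^l)"
      using X xy by blast
    have kmin: "ell i k t \<le> ell i l t" if "t \<in> {x..y}" "l \<le> Nb b" for t l
      unfolding ell_lin using kmin0 that by blast
    have "SS i t = ell i k t" if t: "t \<in> {x..y}" for t
    proof -
      have "x \<in> {a..b}" "y \<in> {a..b}" using xy Psub by auto
      then have t1: "1 \<le> t" "t \<le> b" using t ab by auto
      obtain k' where k': "k' \<le> Nb b" "SS i t = ell i k' t" "\<forall>l. ell i k' t \<le> ell i l t"
        using SS_attain[OF t1] by blast
      have "ell i k t \<le> ell i k' t" using kmin[OF t k'(1)] .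
      moreover have "ell i k' t \<le> ell i k t" using k'(3) by blast
      ultimately show ?thesis using k'(2) by linarith
    qed
    then show ?thesis unfolding ell_lin by blast
  qed
  show "\<exists>P. finite P \<and> a \<in> P \<and> b \<in> P \<and> P \<subseteq> {a..b} \<and>
         (\<forall>x y. x \<in> P \<and> y \<in> P \<and> x < y \<and> {x<..<y} \<inter> P = {} \<longrightarrow>
                (\<exists>m c. \<forall>t\<in>{x..y}. SS i t = m * t + c))"
    apply (rule exI[of _ P])
    apply (intro conjI fP aP bP Psub allI impI)
    apply (rule Y)
    apply assumption
    done
qed

lemma SS_pos: assumes "1 \<le> x" shows "SS i x \<ge> 1"
  using SS_mono[OF order_refl assms, of i] SS_id[of 1 i] by simp

lemma main_sep:
  assumes A: "finite A" "A \<noteq> {}" "j \<notin> A"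
  shows "\<exists>n::nat. n \<ge> 1 \<and> SS j (real n) / Max ((\<lambda>i. SS i (real n)) ` A) > M"
proof -
  define N0 where "N0 = nat \<lceil>M\<rceil> + 3"
  define n where "n = prod_encode (j, N0)"
  have own: "own n = j" unfolding own_def n_def by simp
  have nN: "N0 \<le> n" unfolding n_def by (rule le_prod_encode_2)
  have n3: "n \<ge> 3" using nN unfolding N0_def by linarith
  define D where "D = (2::nat)^(n-2)"
  define K where "K = (4::nat)^n"
  define Pn where "Pn = (2::nat)^(n+1)"
  define x where "x = (2::real)^(K+Pn)"
  have n2eq: "n = (n - 2) + 2" using n3 by simp
  have hD: "real D * 4 = 2^n"
  proof -
    have "(2::real)^n = 2^(n-2) * 2^2" by (subst n2eq) (simp only: power_add)
    then show ?thesis unfolding D_def by simp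
  qed
  have hP: "real Pn = 2 * 2^n" unfolding Pn_def by simp
  have D2: "D \<ge> 2"
  proof -
    have "(2::nat)^1 \<le> 2^(n-2)" using n3 by (intro power_increasing) auto
    then show ?thesis unfolding D_def by simp
  qed
  have Dn: "D \<ge> n - 1"
  proof -
    have "n - 2 < 2^(n-2)" by (rule less_exp)
    then show ?thesis unfolding D_def using n3 by linarith
  qed
  have DK: "D \<le> K"
  proof -
    have "(2::nat)^(n-2) \<le> 2^n" by (intro power_increasing) auto
    also have "(2::nat)^n \<le> 4^n" by (intro power_mono) auto
    finally show ?thesis unfolding D_def K_def .
  qed
  have Kr: "real K = 2^n * 2^n" unfolding K_def by (rule four_pow)
  have x2: "x \<ge> 2"
  proof -
    have "Pn \<ge> 1" unfolding Pn_def by simp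
    then have "(2::real)^1 \<le> 2^(K+Pn)" by (intro power_increasing) auto
    then show ?thesis unfolding x_def by simp
  qed
  have xK: "x / 2^K = 2^Pn" unfolding x_def by (simp add: power_add)
  have up: "SS i x \<le> 2^(Pn+1)" if i: "i \<noteq> j" for i
  proof -
    have "own n \<noteq> i" using own i by simp
    then have "phi i K \<le> LL n K" by (rule phi_le_LL)
    also have "LL n K = real Pn" unfolding LL_def Kr hP by simp
    finally have ph: "phi i K \<le> real Pn" .
    have "SS i x \<le> ell i K x" using SS_le x2 by simp
    also have "\<dots> = (x - 1) / 2^K + 2 powr phi i K" unfolding ell_def ..
    also have "\<dots> \<le> x / 2^K + 2 powr real Pn"
    proof (rule add_mono)
      show "(x - 1) / 2^K \<le> x / 2^K" by (intro divide_right_mono) auto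
      show "2 powr phi i K \<le> 2 powr real Pn" using ph by (intro powr_mono) auto
    qed
    also have "\<dots> = 2^Pn + 2^Pn" unfolding xK by (simp add: powr_realpow)
    also have "\<dots> = 2^(Pn+1)" by simp
    finally show ?thesis .
  qed
  have low: "SS j x \<ge> 2^(Pn+D-1)"
  proof -
    obtain k where k: "SS j x = ell j k x" using SS_attain1 x2 by fastforce
    show ?thesis
    proof (cases "k \<le> K - D")
      case True
      have e: "K + Pn = (Pn + D - 1) + 1 + (K - D)" using DK D2 by simp
      have xe: "x = 2^(Pn+D-1) * 2 * 2^(K-D)" unfolding x_def
        by (subst e) (simp only: power_add power_one_right)
      have "(2::real)^(Pn+D-1) = (x / 2) / 2^(K-D)" unfolding xe by simp
      also have "\<dots> \<le> (x - 1) / 2^(K-D)" using x2 by (intro divide_right_mono) auto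
      also have "\<dots> \<le> (x - 1) / 2^k" using x2 True
        by (intro divide_left_mono) (auto intro: power_increasing)
      also have "\<dots> \<le> ell j k x" using ell_ge_lin x2 by simp
      finally show ?thesis using k by simp
    next
      case False
      have "phi j K - real D \<le> phi j (K - D)" by (rule phi_drop)
      also have "\<dots> \<le> phi j k" using False by (intro phi_mono) simp
      finally have a: "phi j K - real D \<le> phi j k" .
      have "phi j K \<ge> 5/2 * 2^n" unfolding K_def
        by (rule phi_gap[OF own]) (use n3 in linarith)
      then have "real (Pn + D) \<le> phi j k" using a hD hP by simp
      then have "2 powr real (Pn + D) \<le> 2 powr phi j k" by (intro powr_mono) auto
      moreover have "2 powr real (Pn + D) = (2::real)^(Pn+D)" by (rule powr_realpow) simp
      ultimately have "(2::real)^(Pn + D) \<le> 2 powr phi j k" by linarith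
      moreover have "(2::real)^(Pn+D-1) \<le> 2^(Pn+D)" by (intro power_increasing) auto
      moreover have "2 powr phi j k \<le> ell j k x" using ell_ge_pow x2 by simp
      ultimately show ?thesis using k by linarith
    qed
  qed
  have "Max ((\<lambda>i. SS i x) ` A) \<in> (\<lambda>i. SS i x) ` A" using A by (intro Max_in) auto
  then obtain i0 where i0: "i0 \<in> A" "Max ((\<lambda>i. SS i x) ` A) = SS i0 x" by auto
  have i0j: "i0 \<noteq> j" using i0 A by blast
  have pos: "SS i0 x \<ge> 1" using SS_pos x2 by simp
  have e2: "(2::real)^(Pn+D-1) = 2^(D-2) * 2^(Pn+1)"
  proof -
    have "Pn + D - 1 = (D - 2) + (Pn + 1)" using D2 by simp
    then show ?thesis by (simp only: power_add)
  qed
  have "2^(D-2) * SS i0 x \<le> (2::real)^(D-2) * 2^(Pn+1)" using up[OF i0j] by simp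
  also have "\<dots> \<le> SS j x" using low e2 by simp
  finally have r: "2^(D-2) \<le> SS j x / SS i0 x" using pos by (simp add: le_divide_eq)
  have "M \<le> real (nat \<lceil>M\<rceil>)" by linarith
  also have "\<dots> \<le> real (D - 2)" using Dn nN unfolding N0_def by simp
  also have "\<dots> < 2^(D-2)"
  proof -
    have "D - 2 < 2^(D-2)" by (rule less_exp)
    then show ?thesis by (metis of_nat_less_iff of_nat_numeral of_nat_power)
  qed
  finally have "M < SS j x / SS i0 x" using r by linarith
  moreover have "real ((2::nat)^(K+Pn)) = x" unfolding x_def by simp
  moreover have "(2::nat)^(K+Pn) \<ge> 1" by simp
  ultimately show ?thesis using i0(2) by metis
qed

theorem proposition2p6:
  shows "\<exists>S :: nat \<Rightarrow> real \<Rightarrow> real.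
    (\<forall>i\<ge>1. submultiplicative_inf (S i)) \<and>
    (\<forall>A j. finite A \<and> A \<noteq> {} \<and> A \<subseteq> {1..} \<and> j \<ge> 1 \<and> j \<notin> A \<longrightarrow>
       (\<forall>M::real. \<exists>n::nat. n \<ge> 1 \<and>
          S j (real n) / Max ((\<lambda>i. S i (real n)) ` A) > M))"
proof (rule exI[of _ SS], intro conjI allI impI)
  fix i :: nat
  show "submultiplicative_inf (SS i)"
    unfolding submultiplicative_inf_def
  proof (intro conjI)
    show "strict_mono_on {1..} (SS i)"
      by (rule strict_mono_onI) (use SS_strict in auto)
    show "\<forall>x\<in>{1..2}. SS i x = x" using SS_id by auto
    show "\<forall>x y. 1 \<le> x \<longrightarrow> 1 \<le> y \<longrightarrow> SS i (x * y) \<le> SS i x * SS i y"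
      using SS_submult by blast
  qed (rule SS_pl SS_cont SS_concave)+
next
  fix A :: "nat set" and j :: nat and M :: real
  assume "finite A \<and> A \<noteq> {} \<and> A \<subseteq> {1..} \<and> 1 \<le> j \<and> j \<notin> A"
  then show "\<exists>n::nat. n \<ge> 1 \<and> SS j (real n) / Max ((\<lambda>i. SS i (real n)) ` A) > M"
    using main_sep by blast
qed

end
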